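(* Let $X$ and $Y$ be Tychonoff spaces, $\lambda\in\hat{P}(X\times Y)$, let $V_1,\dots,V_n$ be open sets in $X\times Y$ and $\varepsilon_0>0$. Then for every $\varepsilon>0$ there exist pairwise disjoint open sets $W_1,\dots,W_m\subset X\times Y$, each of the form $W_j=W_j'\times W_j''$ with $W_j'\subset X$ and $W_j''\subset Y$ open, and a number $\delta>0$ such that (i) $\lambda(V_i)-\sum_{\{j\colon W_j\subset V_i\}}\lambda(W_j)<\varepsilon$ for every $i=1,\dots,n$; (ii) $O(\lambda,W_1,\dots,W_m,\delta)\subset O(\lambda,V_1,\dots,V_n,\varepsilon_0)$; (iii) for $l=1,2$ and all $j',j''\in\{1,\dots,m\}$, either $\mathrm{pr}_l(W_{j'})\cap\mathrm{pr}_l(W_{j''})=\emptyset$ or $\mathrm{pr}_l(W_{j'})=\mathrm{pr}_l(W_{j''})$.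
   Context: For a Tychonoff space $Z$, $\hat{P}(Z)$ is the set of Radon probability measures on $Z$ (Borel probability measures $\mu$ with $\mu(A)=\sup\{\mu(K)\colon K\subset A \text{ compact}\}$ for all Borel $A$). For $\mu\in\hat{P}(Z)$, open sets $U_1,\dots,U_k\subset Z$ and $\eta>0$, $O(\mu,U_1,\dots,U_k,\eta)=\{\nu\in\hat{P}(Z)\colon \nu(U_i)>\mu(U_i)-\eta,\ i=1,\dots,k\}$; these sets form a base of the weak-* topology. $\mathrm{pr}_1,\mathrm{pr}_2$ are the coordinate projections of $X\times Y$. *)

theory Defs
  imports "HOL-Analysis.Analysis" "HOL-Probability.Probability"
begin

definition tychonoff_space :: "'a topology \<Rightarrow> bool" where
  "tychonoff_space Z \<longleftrightarrow> completely_regular_space Z \<and> Hausdorff_space Z"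

definition borel_of :: "'a topology \<Rightarrow> 'a measure" where
  "borel_of Z = sigma (topspace Z) {U. openin Z U}"

definition radon_probs :: "'a topology \<Rightarrow> 'a measure set" where
  "radon_probs Z = {\<mu>. sets \<mu> = sets (borel_of Z) \<and> prob_space \<mu> \<and>
     (\<forall>A\<in>sets \<mu>. measure \<mu> A = (SUP K\<in>{K. compactin Z K \<and> K \<subseteq> A}. measure \<mu> K))}"

definition weak_nbhd :: "'a topology \<Rightarrow> 'a measure \<Rightarrow> (nat \<Rightarrow> 'a set) \<Rightarrow> nat \<Rightarrow> real \<Rightarrow> 'a measure set" where
  "weak_nbhd Z \<mu> U k \<eta> = {\<nu> \<in> radon_probs Z. \<forall>i<k. measure \<nu> (U i) > measure \<mu> (U i) - \<eta>}"

end

theory Submission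
  imports Defs
begin


lemma borel_facts:
  assumes "sets \<mu> = sets (borel_of Z)"
  shows "space \<mu> = topspace Z" "\<And>U. openin Z U \<Longrightarrow> U \<in> sets \<mu>"
    "\<And>C. closedin Z C \<Longrightarrow> C \<in> sets \<mu>"
proof -
  have sub: "{U. openin Z U} \<subseteq> Pow (topspace Z)" using openin_subset by auto
  show sp: "space \<mu> = topspace Z"
    using sets_eq_imp_space_eq[OF assms] space_measure_of[OF sub] unfolding borel_of_def by simp
  show op: "\<And>U. openin Z U \<Longrightarrow> U \<in> sets \<mu>"
    using assms sets_measure_of[OF sub] unfolding borel_of_def by auto
  fix C assume "closedin Z C"
  then have "C = space \<mu> - (topspace Z - C)" "openin Z (topspace Z - C)"
    using sp \<open>closedin Z C\<close> by (auto simp: closedin_def)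
  then show "C \<in> sets \<mu>" using op[of "topspace Z - C"] by (metis sets.compl_sets)
qed

lemma level_countable:
  assumes "sets \<mu> = sets (borel_of Z)" "prob_space \<mu>" "continuous_map Z euclideanreal h"
  shows "countable {t. measure \<mu> {p \<in> topspace Z. h p = t} \<noteq> 0}"
proof -
  note bf = borel_facts[OF assms(1)]
  have hm: "h \<in> borel_measurable \<mu>"
  proof (rule borel_measurableI)
    fix S :: "real set" assume "open S"
    then have "openin Z {x \<in> topspace Z. h x \<in> S}"
      using openin_continuous_map_preimage[OF assms(3)] by auto
    moreover have "h -` S \<inter> space \<mu> = {x \<in> topspace Z. h x \<in> S}" using bf(1) by auto
    ultimately show "h -` S \<inter> space \<mu> \<in> sets \<mu>" using bf(2) by simp
  qed
  interpret P: prob_space \<mu> by fact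
  interpret D: finite_measure "distr \<mu> borel h" by (rule P.finite_measure_distr[OF hm])
  have "\<And>t. measure (distr \<mu> borel h) {t} = measure \<mu> {p \<in> topspace Z. h p = t}"
    using measure_distr[OF hm] bf(1) by (auto intro!: arg_cong[where f="measure \<mu>"])
  then show ?thesis using D.countable_support by simp
qed

lemma crs_fun:
  assumes "completely_regular_space X" "openin X U" "x \<in> U"
  shows "\<exists>f. continuous_map X euclideanreal f \<and>
     (\<forall>t\<in>{0<..<1::real}. x \<in> {x'\<in>topspace X. f x' < t} \<and> {x'\<in>topspace X. f x' < t} \<subseteq> U)"
proof -
  have xt: "x \<in> topspace X" using assms openin_subset by blast
  have "closedin X (topspace X - U)" using assms(2) by (simp add: closedin_diff)
  moreover have "x \<in> topspace X - (topspace X - U)" using xt assms(3) by simp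
  ultimately obtain f :: "_ \<Rightarrow> real" where f: "continuous_map X (top_of_set {0..1}) f" "f x = 0" "f ` (topspace X - U) \<subseteq> {1}"
    using assms(1) unfolding completely_regular_space_def by meson
  have fc: "continuous_map X euclideanreal f" using f(1) continuous_map_in_subtopology by blast
  have "\<forall>t\<in>{0<..<1::real}. x \<in> {x'\<in>topspace X. f x' < t} \<and> {x'\<in>topspace X. f x' < t} \<subseteq> U"
  proof (intro conjI ballI)
    fix t :: real assume t: "t \<in> {0<..<1}"
    show "x \<in> {x'\<in>topspace X. f x' < t}" using xt f(2) t by auto
    show "{x'\<in>topspace X. f x' < t} \<subseteq> U"
    proof
      fix z assume z: "z \<in> {x'\<in>topspace X. f x' < t}"
      show "z \<in> U"
      proof (rule ccontr)
        assume "z \<notin> U"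
        then have "f z = 1" using f(3) z by auto
        then show False using z t by simp
      qed
    qed
  qed
  then show ?thesis using fc by blast
qed

definition fa :: "('a\<Rightarrow>real)\<times>real\<times>('b\<Rightarrow>real)\<times>real \<Rightarrow> 'a \<Rightarrow> real" where "fa c = fst c"
definition ta :: "('a\<Rightarrow>real)\<times>real\<times>('b\<Rightarrow>real)\<times>real \<Rightarrow> real" where "ta c = fst (snd c)"
definition gb :: "('a\<Rightarrow>real)\<times>real\<times>('b\<Rightarrow>real)\<times>real \<Rightarrow> 'b \<Rightarrow> real" where "gb c = fst (snd (snd c))"
definition sb :: "('a\<Rightarrow>real)\<times>real\<times>('b\<Rightarrow>real)\<times>real \<Rightarrow> real" where "sb c = snd (snd (snd c))"

definition goodc where
 "goodc X Y lam c \<longleftrightarrow> continuous_map X euclideanreal (fa c) \<and> continuous_map Y euclideanreal (gb c) \<and>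
    measure lam {p\<in>topspace (prod_topology X Y). fa c (fst p) = ta c} = 0 \<and>
    measure lam {p\<in>topspace (prod_topology X Y). gb c (snd p) = sb c} = 0"

definition rectc where
 "rectc X Y c = {x\<in>topspace X. fa c x < ta c} \<times> {y\<in>topspace Y. gb c y < sb c}"

lemma rectc_open:
  assumes "goodc X Y lam c" shows "openin (prod_topology X Y) (rectc X Y c)"
proof -
  have "openin X {x\<in>topspace X. fa c x < ta c}"
    using openin_continuous_map_preimage[of X euclideanreal "fa c" "{..<ta c}"] assms
    unfolding goodc_def by auto
  moreover have "openin Y {y\<in>topspace Y. gb c y < sb c}"
    using openin_continuous_map_preimage[of Y euclideanreal "gb c" "{..<sb c}"] assms
    unfolding goodc_def by auto
  ultimately show ?thesis unfolding rectc_def by (simp add: openin_prod_Times_iff)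
qed

lemma point_rect:
  assumes "tychonoff_space X" "tychonoff_space Y" "lam \<in> radon_probs (prod_topology X Y)"
    "openin (prod_topology X Y) V" "(x,y) \<in> V"
  shows "\<exists>c. goodc X Y lam c \<and> (x,y) \<in> rectc X Y c \<and> rectc X Y c \<subseteq> V"
proof -
  obtain U U' where UU: "openin X U" "openin Y U'" "x \<in> U" "y \<in> U'" "U \<times> U' \<subseteq> V"
    using assms(4,5) openin_prod_topology_alt by metis
  obtain f where f: "continuous_map X euclideanreal f"
     "\<forall>t\<in>{0<..<1::real}. x \<in> {x'\<in>topspace X. f x' < t} \<and> {x'\<in>topspace X. f x' < t} \<subseteq> U"
    using crs_fun[of X U x] assms(1) UU unfolding tychonoff_space_def by blast
  obtain g where g: "continuous_map Y euclideanreal g"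
     "\<forall>t\<in>{0<..<1::real}. y \<in> {x'\<in>topspace Y. g x' < t} \<and> {x'\<in>topspace Y. g x' < t} \<subseteq> U'"
    using crs_fun[of Y U' y] assms(2) UU unfolding tychonoff_space_def by blast
  have ls: "sets lam = sets (borel_of (prod_topology X Y))" "prob_space lam"
    using assms(3) unfolding radon_probs_def by auto
  have c1: "countable {t. measure lam {p \<in> topspace (prod_topology X Y). (\<lambda>p. f (fst p)) p = t} \<noteq> 0}"
    by (rule level_countable[OF ls]) (intro continuous_map_compose[OF continuous_map_fst f(1), unfolded o_def])
  obtain t where t: "t \<in> {0<..<1::real}" "t \<notin> {t. measure lam {p \<in> topspace (prod_topology X Y). f (fst p) = t} \<noteq> 0}"
    using open_minus_countable[OF c1, of "{0<..<1::real}"] by auto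
  have c2: "countable {t. measure lam {p \<in> topspace (prod_topology X Y). (\<lambda>p. g (snd p)) p = t} \<noteq> 0}"
    by (rule level_countable[OF ls]) (intro continuous_map_compose[OF continuous_map_snd g(1), unfolded o_def])
  obtain s where s: "s \<in> {0<..<1::real}" "s \<notin> {t. measure lam {p \<in> topspace (prod_topology X Y). g (snd p) = t} \<noteq> 0}"
    using open_minus_countable[OF c2, of "{0<..<1::real}"] by auto
  have ft: "x \<in> {x'\<in>topspace X. f x' < t}" "{x'\<in>topspace X. f x' < t} \<subseteq> U" using f(2) t(1) by blast+
  have gs: "y \<in> {x'\<in>topspace Y. g x' < s}" "{x'\<in>topspace Y. g x' < s} \<subseteq> U'" using g(2) s(1) by blast+
  have "goodc X Y lam (f,t,g,s)"
    unfolding goodc_def fa_def ta_def gb_def sb_def using f(1) g(1) t(2) s(2) by simp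
  moreover have "(x,y) \<in> rectc X Y (f,t,g,s)"
    unfolding rectc_def fa_def ta_def gb_def sb_def using ft(1) gs(1) by simp
  moreover have "rectc X Y (f,t,g,s) \<subseteq> V"
    unfolding rectc_def fa_def ta_def gb_def sb_def using ft(2) gs(2) UU(5) by force
  ultimately show ?thesis by blast
qed

lemma compact_cover:
  assumes "tychonoff_space X" "tychonoff_space Y" "lam \<in> radon_probs (prod_topology X Y)"
    "openin (prod_topology X Y) V" "compactin (prod_topology X Y) K" "K \<subseteq> V"
  shows "\<exists>C. finite C \<and> (\<forall>c\<in>C. goodc X Y lam c \<and> rectc X Y c \<subseteq> V) \<and> K \<subseteq> (\<Union>c\<in>C. rectc X Y c)"
proof -
  let ?G = "{c. goodc X Y lam c \<and> rectc X Y c \<subseteq> V}"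
  have covK: "K \<subseteq> \<Union>(rectc X Y ` ?G)"
  proof
    fix p assume "p \<in> K"
    then obtain x y where "p = (x,y)" "(x,y) \<in> V" using assms(6) by (cases p) auto
    then obtain c where "goodc X Y lam c" "(x,y) \<in> rectc X Y c" "rectc X Y c \<subseteq> V"
      using point_rect[OF assms(1-4)] by blast
    then show "p \<in> \<Union>(rectc X Y ` ?G)" using \<open>p = (x,y)\<close> by blast
  qed
  have opn: "\<forall>B\<in>rectc X Y ` ?G. openin (prod_topology X Y) B" using rectc_open by auto
  have cmp: "\<And>\<U>. (\<forall>B\<in>\<U>. openin (prod_topology X Y) B) \<and> K \<subseteq> \<Union>\<U> \<Longrightarrow> (\<exists>\<F>. finite \<F> \<and> \<F> \<subseteq> \<U> \<and> K \<subseteq> \<Union>\<F>)"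
    using assms(5) unfolding compactin_def by blast
  obtain F where F: "finite F" "F \<subseteq> rectc X Y ` ?G" "K \<subseteq> \<Union>F"
    using cmp[of "rectc X Y ` ?G"] covK opn by blast
  obtain C where C: "C \<subseteq> ?G" "finite C" "F = rectc X Y ` C"
    using finite_subset_image[OF F(1) F(2)] by blast
  have "\<forall>c\<in>C. goodc X Y lam c \<and> rectc X Y c \<subseteq> V" using C(1) by blast
  moreover have "K \<subseteq> (\<Union>c\<in>C. rectc X Y c)" using F(3) C(3) by simp
  ultimately show ?thesis using C(2) by blast
qed


definition atom :: "'x topology \<Rightarrow> 'c set \<Rightarrow> 'c set \<Rightarrow> ('c \<Rightarrow> 'x \<Rightarrow> real) \<Rightarrow> ('c \<Rightarrow> real) \<Rightarrow> 'x set" where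
  "atom X C S F T = {x\<in>topspace X. \<forall>c\<in>C. (c\<in>S \<longrightarrow> F c x < T c) \<and> (c\<notin>S \<longrightarrow> T c < F c x)}"

lemma atom_open:
  assumes "finite C" "\<forall>c\<in>C. continuous_map X euclideanreal (F c)"
  shows "openin X (atom X C S F T)"
proof -
  let ?O = "\<lambda>c. if c\<in>S then {x\<in>topspace X. F c x < T c} else {x\<in>topspace X. T c < F c x}"
  have eq: "atom X C S F T = topspace X \<inter> \<Inter>(?O ` C)"
    unfolding atom_def by (auto split: if_splits)
  have "\<And>c. c \<in> C \<Longrightarrow> openin X (?O c)"
  proof -
    fix c assume c: "c \<in> C"
    have cc: "continuous_map X euclideanreal (F c)" using assms(2) c by simp
    have "openin X {x\<in>topspace X. F c x \<in> {..<T c}}"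
      by (rule openin_continuous_map_preimage[OF cc]) simp
    moreover have "openin X {x\<in>topspace X. F c x \<in> {T c<..}}"
      by (rule openin_continuous_map_preimage[OF cc]) simp
    ultimately show "openin X (?O c)" by auto
  qed
  then have op: "\<And>U. U \<in> ?O ` C \<Longrightarrow> openin X U" by blast
  show ?thesis unfolding eq
    by (rule openin_Int_Inter[OF finite_imageI[OF assms(1)] openin_topspace op])
qed

lemma atom_disj:
  assumes "S \<subseteq> C" "S' \<subseteq> C" "S \<noteq> S'"
  shows "atom X C S F T \<inter> atom X C S' F T = {}"
proof -
  obtain c where c: "c \<in> C" "(c \<in> S \<and> c \<notin> S') \<or> (c \<in> S' \<and> c \<notin> S)" using assms by blast
  show ?thesis
  proof (rule ccontr)
    assume "atom X C S F T \<inter> atom X C S' F T \<noteq> {}"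
    then obtain x where x: "x \<in> atom X C S F T" "x \<in> atom X C S' F T" by blast
    have "(c \<in> S \<longrightarrow> F c x < T c) \<and> (c \<notin> S \<longrightarrow> T c < F c x)" using x(1) c(1) unfolding atom_def by blast
    moreover have "(c \<in> S' \<longrightarrow> F c x < T c) \<and> (c \<notin> S' \<longrightarrow> T c < F c x)" using x(2) c(1) unfolding atom_def by blast
    ultimately show False using c(2) by auto
  qed
qed



lemma choose_K:
  assumes "lam \<in> radon_probs Z" "openin Z V" "e > 0"
  shows "\<exists>K. compactin Z K \<and> K \<subseteq> V \<and> measure lam V - measure lam K < e"
proof -
  have ls: "sets lam = sets (borel_of Z)" "prob_space lam"
    and rad: "\<forall>A\<in>sets lam. measure lam A = (SUP K\<in>{K. compactin Z K \<and> K \<subseteq> A}. measure lam K)"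
    using assms(1) unfolding radon_probs_def by auto
  interpret L: prob_space lam by (rule ls(2))
  have Vs: "V \<in> sets lam" using borel_facts(2)[OF ls(1) assms(2)] .
  have ne: "{K. compactin Z K \<and> K \<subseteq> V} \<noteq> {}" using compactin_empty by blast
  have bdd: "bdd_above ((\<lambda>K. measure lam K) ` {K. compactin Z K \<and> K \<subseteq> V})"
    by (rule bdd_aboveI[of _ 1]) auto
  have "measure lam V - e < (SUP K\<in>{K. compactin Z K \<and> K \<subseteq> V}. measure lam K)"
    using rad Vs assms(3) by simp
  then obtain K where "K \<in> {K. compactin Z K \<and> K \<subseteq> V}" "measure lam V - e < measure lam K"
    using less_cSUP_iff[OF ne bdd] by blast
  then show ?thesis by auto
qed


theorem lemma6:
  fixes X :: "'a topology" and Y :: "'b topology"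
    and lam :: "('a \<times> 'b) measure"
    and V :: "nat \<Rightarrow> ('a \<times> 'b) set" and n :: nat and \<epsilon>0 :: real
  assumes "tychonoff_space X" and "tychonoff_space Y"
    and "lam \<in> radon_probs (prod_topology X Y)"
    and "\<forall>i<n. openin (prod_topology X Y) (V i)"
    and "\<epsilon>0 > 0"
  shows "\<forall>\<epsilon>>0. \<exists>(m::nat) (W1::nat \<Rightarrow> 'a set) (W2::nat \<Rightarrow> 'b set) \<delta>::real.
     (\<forall>j<m. openin X (W1 j) \<and> openin Y (W2 j)) \<and>
     (\<forall>j<m. \<forall>j'<m. j \<noteq> j' \<longrightarrow> (W1 j \<times> W2 j) \<inter> (W1 j' \<times> W2 j') = {}) \<and>
     \<delta> > 0 \<and>
     (\<forall>i<n. measure lam (V i) - (\<Sum>j\<in>{j. j < m \<and> W1 j \<times> W2 j \<subseteq> V i}. measure lam (W1 j \<times> W2 j)) < \<epsilon>) \<and>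
     weak_nbhd (prod_topology X Y) lam (\<lambda>j. W1 j \<times> W2 j) m \<delta>
       \<subseteq> weak_nbhd (prod_topology X Y) lam V n \<epsilon>0 \<and>
     (\<forall>j<m. \<forall>j'<m.
        (fst ` (W1 j \<times> W2 j) \<inter> fst ` (W1 j' \<times> W2 j') = {} \<or> fst ` (W1 j \<times> W2 j) = fst ` (W1 j' \<times> W2 j')) \<and>
        (snd ` (W1 j \<times> W2 j) \<inter> snd ` (W1 j' \<times> W2 j') = {} \<or> snd ` (W1 j \<times> W2 j) = snd ` (W1 j' \<times> W2 j')))"
proof (intro allI impI)
  fix \<epsilon> :: real assume "\<epsilon> > 0"
  define e where "e = min \<epsilon> (\<epsilon>0/2)"
  have e: "e > 0" "e \<le> \<epsilon>" "e \<le> \<epsilon>0/2" using \<open>\<epsilon>>0\<close> assms(5) unfolding e_def by auto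
  let ?P = "prod_topology X Y"
  have ls: "sets lam = sets (borel_of ?P)" "prob_space lam"
    using assms(3) unfolding radon_probs_def by auto
  interpret L: prob_space lam by (rule ls(2))
  note bf = borel_facts[OF ls(1)]
  define Q where "Q i KC \<longleftrightarrow> (compactin ?P (fst KC) \<and> fst KC \<subseteq> V i \<and> measure lam (V i) - measure lam (fst KC) < e
      \<and> finite (snd KC) \<and> (\<forall>c\<in>snd KC. goodc X Y lam c \<and> rectc X Y c \<subseteq> V i) \<and> fst KC \<subseteq> (\<Union>c\<in>snd KC. rectc X Y c))" for i KC
  have "\<forall>i. \<exists>KC. i<n \<longrightarrow> Q i KC"
  proof (intro allI)
    fix i show "\<exists>KC. i<n \<longrightarrow> Q i KC"
    proof (cases "i < n")
      case False then show ?thesis by blast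
    next
      case i: True
      have Vi: "openin ?P (V i)" using assms(4) i by simp
    obtain K where K: "compactin ?P K" "K \<subseteq> V i" "measure lam (V i) - measure lam K < e"
      using choose_K[OF assms(3) Vi e(1)] by blast
    obtain C where "finite C" "\<forall>c\<in>C. goodc X Y lam c \<and> rectc X Y c \<subseteq> V i" "K \<subseteq> (\<Union>c\<in>C. rectc X Y c)"
      using compact_cover[OF assms(1,2,3) Vi K(1,2)] by blast
    then have "Q i (K,C)" using K unfolding Q_def by simp
    then show ?thesis by blast
    qed
  qed
  from choice[OF this] obtain KC where KC0: "\<forall>i. i<n \<longrightarrow> Q i (KC i)" by blast
  have KC: "\<And>i. i<n \<Longrightarrow> compactin ?P (fst (KC i)) \<and> fst (KC i) \<subseteq> V i \<and> measure lam (V i) - measure lam (fst (KC i)) < e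
      \<and> finite (snd (KC i)) \<and> (\<forall>c\<in>snd (KC i). goodc X Y lam c \<and> rectc X Y c \<subseteq> V i) \<and> fst (KC i) \<subseteq> (\<Union>c\<in>snd (KC i). rectc X Y c)"
    using KC0 unfolding Q_def by simp
  define C where "C = (\<Union>i<n. snd (KC i))"
  have Cfin: "finite C" unfolding C_def using KC by auto
  have Cgood: "\<And>c. c \<in> C \<Longrightarrow> goodc X Y lam c" unfolding C_def using KC by blast
  define Pairs where "Pairs = Pow C \<times> Pow C"
  have Pfin: "finite Pairs" unfolding Pairs_def using Cfin by simp
  define m where "m = card Pairs"
  obtain h where h: "bij_betw h {0..<m} Pairs" unfolding m_def using ex_bij_betw_nat_finite[OF Pfin] by blast
  have hP: "\<And>j. j < m \<Longrightarrow> fst (h j) \<subseteq> C \<and> snd (h j) \<subseteq> C"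
  proof -
    fix j assume "j < m"
    then have "h j \<in> Pow C \<times> Pow C" using bij_betw_apply[OF h] unfolding Pairs_def by simp
    then show "fst (h j) \<subseteq> C \<and> snd (h j) \<subseteq> C" by (simp add: mem_Times_iff)
  qed
  define W1 where "W1 j = atom X C (fst (h j)) fa ta" for j
  define W2 where "W2 j = atom Y C (snd (h j)) gb sb" for j
  define \<delta> where "\<delta> = \<epsilon>0 / (2 * (real m + 1))"
  have \<delta>: "\<delta> > 0" "real m * \<delta> < \<epsilon>0 / 2"
  proof -
    show "\<delta> > 0" unfolding \<delta>_def using assms(5) by simp
    have "real m * \<delta> = (\<epsilon>0 / 2) * (real m / (real m + 1))" unfolding \<delta>_def by (simp add: field_simps)
    also have "\<dots> < (\<epsilon>0 / 2) * 1" using assms(5) by (intro mult_strict_left_mono) auto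
    finally show "real m * \<delta> < \<epsilon>0 / 2" by simp
  qed
  have cX: "\<forall>c\<in>C. continuous_map X euclideanreal (fa c)" and cY: "\<forall>c\<in>C. continuous_map Y euclideanreal (gb c)"
    using Cgood unfolding goodc_def by auto
  have Wopen: "\<forall>j<m. openin X (W1 j) \<and> openin Y (W2 j)"
    unfolding W1_def W2_def using atom_open[OF Cfin cX] atom_open[OF Cfin cY] by simp
  have hinj: "inj_on h {0..<m}" using h by (rule bij_betw_imp_inj_on)
  have A1: "\<forall>j<m. \<forall>j'<m. fst (h j) \<noteq> fst (h j') \<longrightarrow> W1 j \<inter> W1 j' = {}"
  proof (intro allI impI)
    fix j j' assume jj: "j < m" "j' < m" "fst (h j) \<noteq> fst (h j')"
    show "W1 j \<inter> W1 j' = {}" unfolding W1_def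
      by (rule atom_disj[OF conjunct1[OF hP[OF jj(1)]] conjunct1[OF hP[OF jj(2)]] jj(3)])
  qed
  have A2: "\<forall>j<m. \<forall>j'<m. snd (h j) \<noteq> snd (h j') \<longrightarrow> W2 j \<inter> W2 j' = {}"
  proof (intro allI impI)
    fix j j' assume jj: "j < m" "j' < m" "snd (h j) \<noteq> snd (h j')"
    show "W2 j \<inter> W2 j' = {}" unfolding W2_def
      by (rule atom_disj[OF conjunct2[OF hP[OF jj(1)]] conjunct2[OF hP[OF jj(2)]] jj(3)])
  qed
  have Wdisj: "\<forall>j<m. \<forall>j'<m. j \<noteq> j' \<longrightarrow> (W1 j \<times> W2 j) \<inter> (W1 j' \<times> W2 j') = {}"
  proof (intro allI impI)
    fix j j' assume jj: "j < m" "j' < m" "j \<noteq> j'"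
    then have "h j \<noteq> h j'" using hinj by (simp add: inj_on_eq_iff)
    then have "fst (h j) \<noteq> fst (h j') \<or> snd (h j) \<noteq> snd (h j')" by (simp add: prod_eq_iff)
    then have "W1 j \<inter> W1 j' = {} \<or> W2 j \<inter> W2 j' = {}" using A1 A2 jj by blast
    then show "(W1 j \<times> W2 j) \<inter> (W1 j' \<times> W2 j') = {}" by (auto simp: Times_Int_Times)
  qed
  have Wop: "\<And>j. j < m \<Longrightarrow> openin ?P (W1 j \<times> W2 j)"
    using Wopen by (simp add: openin_prod_Times_iff)
  have Wsets: "\<And>j. j < m \<Longrightarrow> W1 j \<times> W2 j \<in> sets lam"
    using Wop bf(2) by blast
  define J where "J i = {j. j < m \<and> W1 j \<times> W2 j \<subseteq> V i}" for i
  have Jsub: "\<And>i. J i \<subseteq> {..<m}" unfolding J_def by auto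
  have Jfin: "\<And>i. finite (J i)" "\<And>i. card (J i) \<le> m"
    using finite_subset[OF Jsub] card_mono[OF _ Jsub] by auto
  define Z1 where "Z1 c = {p\<in>topspace ?P. fa c (fst p) = ta c}" for c :: "('a\<Rightarrow>real)\<times>real\<times>('b\<Rightarrow>real)\<times>real"
  define Z2 where "Z2 c = {p\<in>topspace ?P. gb c (snd p) = sb c}" for c :: "('a\<Rightarrow>real)\<times>real\<times>('b\<Rightarrow>real)\<times>real"
  define Zs where "Zs = (\<Union>c\<in>C. Z1 c \<union> Z2 c)"
  have Z1s: "\<And>c. c \<in> C \<Longrightarrow> Z1 c \<in> sets lam"
  proof -
    fix c assume c: "c \<in> C"
    have "continuous_map X euclideanreal (fa c)" using cX c by simp
    then have "continuous_map ?P euclideanreal (fa c \<circ> fst)" by (rule continuous_map_compose[OF continuous_map_fst])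
    then have "continuous_map ?P euclideanreal (\<lambda>p. fa c (fst p))" by (simp add: o_def)
    then have "closedin ?P {p\<in>topspace ?P. fa c (fst p) \<in> {ta c}}"
      by (rule closedin_continuous_map_preimage) simp
    then show "Z1 c \<in> sets lam" unfolding Z1_def using bf(3) by simp
  qed
  have Z2s: "\<And>c. c \<in> C \<Longrightarrow> Z2 c \<in> sets lam"
  proof -
    fix c assume c: "c \<in> C"
    have "continuous_map Y euclideanreal (gb c)" using cY c by simp
    then have "continuous_map ?P euclideanreal (gb c \<circ> snd)" by (rule continuous_map_compose[OF continuous_map_snd])
    then have "continuous_map ?P euclideanreal (\<lambda>p. gb c (snd p))" by (simp add: o_def)
    then have "closedin ?P {p\<in>topspace ?P. gb c (snd p) \<in> {sb c}}"
      by (rule closedin_continuous_map_preimage) simp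
    then show "Z2 c \<in> sets lam" unfolding Z2_def using bf(3) by simp
  qed
  have Zss: "Zs \<in> sets lam" unfolding Zs_def using Z1s Z2s Cfin by auto
  have Z0: "measure lam Zs = 0"
  proof -
    have "measure lam Zs \<le> (\<Sum>c\<in>C. measure lam (Z1 c \<union> Z2 c))"
      unfolding Zs_def using Z1s Z2s Cfin by (intro L.finite_measure_subadditive_finite) auto
    also have "\<dots> \<le> (\<Sum>c\<in>C. measure lam (Z1 c) + measure lam (Z2 c))"
      using Z1s Z2s by (intro sum_mono measure_Un_le) auto
    also have "\<dots> = 0"
      using Cgood unfolding goodc_def Z1_def Z2_def by simp
    finally show ?thesis by (simp add: antisym)
  qed
  have cover: "fst (KC i) \<subseteq> Zs \<union> (\<Union>j\<in>J i. W1 j \<times> W2 j)" if i: "i < n" for i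
  proof
    fix p assume pK: "p \<in> fst (KC i)"
    obtain c where c: "c \<in> snd (KC i)" "p \<in> rectc X Y c" "rectc X Y c \<subseteq> V i"
      using KC[OF i] pK by blast
    have cC: "c \<in> C" unfolding C_def using c(1) i by blast
    obtain x y where p: "p = (x,y)" by (cases p)
    have xy: "x \<in> topspace X" "y \<in> topspace Y" "fa c x < ta c" "gb c y < sb c"
      using c(2) unfolding p rectc_def by auto
    show "p \<in> Zs \<union> (\<Union>j\<in>J i. W1 j \<times> W2 j)"
    proof (cases "p \<in> Zs")
      case True then show ?thesis by blast
    next
      case False
      then have nz: "\<And>c'. c' \<in> C \<Longrightarrow> fa c' x \<noteq> ta c' \<and> gb c' y \<noteq> sb c'"
        unfolding Zs_def Z1_def Z2_def p using xy(1,2) by auto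
      define S where "S = {c'\<in>C. fa c' x < ta c'}"
      define T where "T = {c'\<in>C. gb c' y < sb c'}"
      have "(S,T) \<in> Pairs" unfolding Pairs_def S_def T_def by auto
      then obtain j where j: "j \<in> {0..<m}" "h j = (S,T)"
        using bij_betw_imp_surj_on[OF h] by (metis imageE)
      have xS: "x \<in> W1 j"
      proof -
        have "\<forall>c'\<in>C. (c'\<in>S \<longrightarrow> fa c' x < ta c') \<and> (c'\<notin>S \<longrightarrow> ta c' < fa c' x)"
        proof
          fix c' assume c': "c' \<in> C"
          have "fa c' x \<noteq> ta c'" using nz[OF c'] by simp
          then show "(c'\<in>S \<longrightarrow> fa c' x < ta c') \<and> (c'\<notin>S \<longrightarrow> ta c' < fa c' x)"
            unfolding S_def using c' by auto
        qed
        then show ?thesis unfolding W1_def j(2) atom_def using xy(1) by simp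
      qed
      have yT: "y \<in> W2 j"
      proof -
        have "\<forall>c'\<in>C. (c'\<in>T \<longrightarrow> gb c' y < sb c') \<and> (c'\<notin>T \<longrightarrow> sb c' < gb c' y)"
        proof
          fix c' assume c': "c' \<in> C"
          have "gb c' y \<noteq> sb c'" using nz[OF c'] by simp
          then show "(c'\<in>T \<longrightarrow> gb c' y < sb c') \<and> (c'\<notin>T \<longrightarrow> sb c' < gb c' y)"
            unfolding T_def using c' by auto
        qed
        then show ?thesis unfolding W2_def j(2) atom_def using xy(2) by simp
      qed
      have "W1 j \<times> W2 j \<subseteq> rectc X Y c"
      proof
        fix q assume "q \<in> W1 j \<times> W2 j"
        then obtain x' y' where q: "q = (x',y')" "x' \<in> W1 j" "y' \<in> W2 j" by blast
        have "c \<in> S" unfolding S_def using cC xy(3) by simp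
        then have "x' \<in> topspace X \<and> fa c x' < ta c" using q(2) cC unfolding W1_def j(2) atom_def by simp
        moreover have "c \<in> T" unfolding T_def using cC xy(4) by simp
        then have "y' \<in> topspace Y \<and> gb c y' < sb c" using q(3) cC unfolding W2_def j(2) atom_def by simp
        ultimately show "q \<in> rectc X Y c" unfolding q(1) rectc_def by simp
      qed
      then have "j \<in> J i" unfolding J_def using j(1) c(3) by auto
      then show ?thesis using xS yT p by blast
    qed
  qed
  have part1: "\<forall>i<n. measure lam (V i) - (\<Sum>j\<in>J i. measure lam (W1 j \<times> W2 j)) < e"
  proof (intro allI impI)
    fix i assume i: "i < n"
    have Us: "(\<Union>j\<in>J i. W1 j \<times> W2 j) \<in> sets lam"
      using Wsets Jfin(1)[of i] unfolding J_def by auto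
    have "measure lam (fst (KC i)) \<le> measure lam (Zs \<union> (\<Union>j\<in>J i. W1 j \<times> W2 j))"
      using cover[OF i] Zss Us by (intro L.finite_measure_mono) auto
    also have "\<dots> \<le> measure lam Zs + measure lam (\<Union>j\<in>J i. W1 j \<times> W2 j)"
      using Zss Us by (rule measure_Un_le)
    also have "\<dots> \<le> (\<Sum>j\<in>J i. measure lam (W1 j \<times> W2 j))"
      using Z0 Wsets Jfin(1)[of i] unfolding J_def
      by (simp add: L.finite_measure_subadditive_finite image_subset_iff)
    finally show "measure lam (V i) - (\<Sum>j\<in>J i. measure lam (W1 j \<times> W2 j)) < e"
      using KC[OF i] by linarith
  qed
  have part2: "weak_nbhd ?P lam (\<lambda>j. W1 j \<times> W2 j) m \<delta> \<subseteq> weak_nbhd ?P lam V n \<epsilon>0"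
  proof
    fix \<nu> assume "\<nu> \<in> weak_nbhd ?P lam (\<lambda>j. W1 j \<times> W2 j) m \<delta>"
    then have \<nu>: "\<nu> \<in> radon_probs ?P" "\<And>j. j < m \<Longrightarrow> measure \<nu> (W1 j \<times> W2 j) > measure lam (W1 j \<times> W2 j) - \<delta>"
      unfolding weak_nbhd_def by auto
    have ns: "sets \<nu> = sets lam" "prob_space \<nu>" using \<nu>(1) ls(1) unfolding radon_probs_def by auto
    interpret N: prob_space \<nu> by (rule ns(2))
    have "measure \<nu> (V i) > measure lam (V i) - \<epsilon>0" if i: "i < n" for i
    proof -
      have Vs: "V i \<in> sets \<nu>" using assms(4) i bf(2) ns(1) by simp
      have WsN: "(\<lambda>j. W1 j \<times> W2 j) ` J i \<subseteq> sets \<nu>" using Wsets ns(1) unfolding J_def by auto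
      have dj: "disjoint_family_on (\<lambda>j. W1 j \<times> W2 j) (J i)"
        unfolding disjoint_family_on_def J_def using Wdisj by auto
      have "(\<Sum>j\<in>J i. measure lam (W1 j \<times> W2 j)) - real m * \<delta> \<le> (\<Sum>j\<in>J i. measure lam (W1 j \<times> W2 j)) - real (card (J i)) * \<delta>"
        using Jfin(2)[of i] \<delta>(1) by (simp add: mult_right_mono)
      also have "\<dots> = (\<Sum>j\<in>J i. measure lam (W1 j \<times> W2 j) - \<delta>)"
        by (simp add: sum_subtractf)
      also have "\<dots> \<le> (\<Sum>j\<in>J i. measure \<nu> (W1 j \<times> W2 j))"
        using \<nu>(2) unfolding J_def by (intro sum_mono) (simp add: less_imp_le)
      also have "\<dots> = measure \<nu> (\<Union>j\<in>J i. W1 j \<times> W2 j)"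
        using N.finite_measure_finite_Union[OF Jfin(1) WsN dj] by simp
      also have "\<dots> \<le> measure \<nu> (V i)"
        using Vs unfolding J_def by (intro N.finite_measure_mono) auto
      finally have "(\<Sum>j\<in>J i. measure lam (W1 j \<times> W2 j)) - real m * \<delta> \<le> measure \<nu> (V i)" .
      then show ?thesis using part1 i \<delta>(2) e(3) by fastforce
    qed
    then show "\<nu> \<in> weak_nbhd ?P lam V n \<epsilon>0" unfolding weak_nbhd_def using \<nu>(1) by auto
  qed
  have part3: "\<forall>j<m. \<forall>j'<m.
        (fst ` (W1 j \<times> W2 j) \<inter> fst ` (W1 j' \<times> W2 j') = {} \<or> fst ` (W1 j \<times> W2 j) = fst ` (W1 j' \<times> W2 j')) \<and>
        (snd ` (W1 j \<times> W2 j) \<inter> snd ` (W1 j' \<times> W2 j') = {} \<or> snd ` (W1 j \<times> W2 j) = snd ` (W1 j' \<times> W2 j'))"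
  proof (intro allI impI conjI)
    fix j j' assume jj: "j < m" "j' < m"
    have B1: "W1 j \<inter> W1 j' = {} \<or> W1 j = W1 j'"
    proof (cases "fst (h j) = fst (h j')")
      case True then show ?thesis unfolding W1_def by simp
    next
      case False then show ?thesis using A1 jj by blast
    qed
    have B2: "W2 j \<inter> W2 j' = {} \<or> W2 j = W2 j'"
    proof (cases "snd (h j) = snd (h j')")
      case True then show ?thesis unfolding W2_def by simp
    next
      case False then show ?thesis using A2 jj by blast
    qed
    show "fst ` (W1 j \<times> W2 j) \<inter> fst ` (W1 j' \<times> W2 j') = {} \<or> fst ` (W1 j \<times> W2 j) = fst ` (W1 j' \<times> W2 j')"
      unfolding fst_image_times using B1 by auto
    show "snd ` (W1 j \<times> W2 j) \<inter> snd ` (W1 j' \<times> W2 j') = {} \<or> snd ` (W1 j \<times> W2 j) = snd ` (W1 j' \<times> W2 j')"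
      unfolding snd_image_times using B2 by auto
  qed
  have part1': "\<forall>i<n. measure lam (V i) - (\<Sum>j\<in>{j. j < m \<and> W1 j \<times> W2 j \<subseteq> V i}. measure lam (W1 j \<times> W2 j)) < \<epsilon>"
    using part1 e(2) unfolding J_def by fastforce
  show "\<exists>(m::nat) (W1::nat \<Rightarrow> 'a set) (W2::nat \<Rightarrow> 'b set) \<delta>::real.
     (\<forall>j<m. openin X (W1 j) \<and> openin Y (W2 j)) \<and>
     (\<forall>j<m. \<forall>j'<m. j \<noteq> j' \<longrightarrow> (W1 j \<times> W2 j) \<inter> (W1 j' \<times> W2 j') = {}) \<and>
     \<delta> > 0 \<and>
     (\<forall>i<n. measure lam (V i) - (\<Sum>j\<in>{j. j < m \<and> W1 j \<times> W2 j \<subseteq> V i}. measure lam (W1 j \<times> W2 j)) < \<epsilon>) \<and>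
     weak_nbhd (prod_topology X Y) lam (\<lambda>j. W1 j \<times> W2 j) m \<delta>
       \<subseteq> weak_nbhd (prod_topology X Y) lam V n \<epsilon>0 \<and>
     (\<forall>j<m. \<forall>j'<m.
        (fst ` (W1 j \<times> W2 j) \<inter> fst ` (W1 j' \<times> W2 j') = {} \<or> fst ` (W1 j \<times> W2 j) = fst ` (W1 j' \<times> W2 j')) \<and>
        (snd ` (W1 j \<times> W2 j) \<inter> snd ` (W1 j' \<times> W2 j') = {} \<or> snd ` (W1 j \<times> W2 j) = snd ` (W1 j' \<times> W2 j')))"
    apply (rule exI[of _ m], rule exI[of _ W1], rule exI[of _ W2], rule exI[of _ \<delta>])
    using Wopen Wdisj \<delta>(1) part1' part2 part3 by (intro conjI)
qed

end
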